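(* Let $\mathcal{C}$ be a model of linear logic with comonad $(!,\mathrm{der},\mathrm{dig})$. Let $(S,\pi_0,\pi_1,\sigma)$ be a summability structure on $\mathcal{C}$. Let $\partial_X:!SX\to S!X$ be a natural transformation satisfying $\pi_0\circ\partial_X=!\pi_0$, and set $\mathrm{d}_X:=\pi_1\circ\partial_X:!SX\to !X$. Then the equation $S(\mathrm{der}_X)\circ\partial_X=\mathrm{der}_{SX}$ holds (for all $X$) if and only if $\mathrm{der}_X\circ \mathrm{d}_X=\mathrm{der}_X\circ !\pi_1$ holds (for all $X$).
   Context: A comonad $(!,\mathrm{der},\mathrm{dig})$ consists of an endofunctor $!$ with natural transformations $\mathrm{der}_X:!X\to X$ and $\mathrm{dig}_X:!X\to !!X$ satisfying the comonad laws. A pre-summability structure $(S,\pi_0,\pi_1,\sigma)$ on $\mathcal{C}$ consists of the following data. There are distinguished zero morphisms $0_{X,Y}$. There is an endofunctor $S$ with $S(0)=0$. There are natural transformations $\pi_0,\pi_1,\sigma:S\Rightarrow\mathrm{Id}$, where $\pi_0,\pi_1$ are jointly monic: $\pi_0\circ f=\pi_0\circ g$ and $\pi_1\circ f=\pi_1\circ g$ imply $f=g$. Morphisms $f_0,f_1:X\to Y$ are summable if there is a (unique) $\langle f_0,f_1\rangle:X\to SY$ with $\pi_i\circ\langle f_0,f_1\rangle=f_i$. Their sum is $\sigma\circ\langle f_0,f_1\rangle$. A summability structure is a pre-summability structure whose partial sum is commutative, has $0$ as neutral element, and is associative, in the partial-commutative-monoid sense. *)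

theory Defs
  imports Main
begin

text \<open>A category is given by a set of objects Obj, hom-sets Hom X Y,
  a composition  cmp g f  (meaning g after f) and identities idm X.\<close>

definition category ::
  "'o set \<Rightarrow> ('o \<Rightarrow> 'o \<Rightarrow> 'm set) \<Rightarrow> ('m \<Rightarrow> 'm \<Rightarrow> 'm) \<Rightarrow> ('o \<Rightarrow> 'm) \<Rightarrow> bool" where
  "category Obj Hom cmp idm \<longleftrightarrow>
     (\<forall>X\<in>Obj. idm X \<in> Hom X X) \<and>
     (\<forall>X\<in>Obj. \<forall>Y\<in>Obj. \<forall>Z\<in>Obj. \<forall>f\<in>Hom X Y. \<forall>g\<in>Hom Y Z. cmp g f \<in> Hom X Z) \<and>
     (\<forall>X\<in>Obj. \<forall>Y\<in>Obj. \<forall>f\<in>Hom X Y. cmp (idm Y) f = f \<and> cmp f (idm X) = f) \<and>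
     (\<forall>W\<in>Obj. \<forall>X\<in>Obj. \<forall>Y\<in>Obj. \<forall>Z\<in>Obj. \<forall>f\<in>Hom W X. \<forall>g\<in>Hom X Y. \<forall>h\<in>Hom Y Z.
        cmp h (cmp g f) = cmp (cmp h g) f)"

definition endofunctor ::
  "'o set \<Rightarrow> ('o \<Rightarrow> 'o \<Rightarrow> 'm set) \<Rightarrow> ('m \<Rightarrow> 'm \<Rightarrow> 'm) \<Rightarrow> ('o \<Rightarrow> 'm)
   \<Rightarrow> ('o \<Rightarrow> 'o) \<Rightarrow> ('m \<Rightarrow> 'm) \<Rightarrow> bool" where
  "endofunctor Obj Hom cmp idm Fo Fm \<longleftrightarrow>
     (\<forall>X\<in>Obj. Fo X \<in> Obj) \<and>
     (\<forall>X\<in>Obj. \<forall>Y\<in>Obj. \<forall>f\<in>Hom X Y. Fm f \<in> Hom (Fo X) (Fo Y)) \<and>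
     (\<forall>X\<in>Obj. Fm (idm X) = idm (Fo X)) \<and>
     (\<forall>X\<in>Obj. \<forall>Y\<in>Obj. \<forall>Z\<in>Obj. \<forall>f\<in>Hom X Y. \<forall>g\<in>Hom Y Z.
        Fm (cmp g f) = cmp (Fm g) (Fm f))"

definition nat_trans ::
  "'o set \<Rightarrow> ('o \<Rightarrow> 'o \<Rightarrow> 'm set) \<Rightarrow> ('m \<Rightarrow> 'm \<Rightarrow> 'm)
   \<Rightarrow> ('o \<Rightarrow> 'o) \<Rightarrow> ('m \<Rightarrow> 'm) \<Rightarrow> ('o \<Rightarrow> 'o) \<Rightarrow> ('m \<Rightarrow> 'm) \<Rightarrow> ('o \<Rightarrow> 'm) \<Rightarrow> bool" where
  "nat_trans Obj Hom cmp Fo Fm Go Gm eta \<longleftrightarrow>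
     (\<forall>X\<in>Obj. eta X \<in> Hom (Fo X) (Go X)) \<and>
     (\<forall>X\<in>Obj. \<forall>Y\<in>Obj. \<forall>f\<in>Hom X Y. cmp (Gm f) (eta X) = cmp (eta Y) (Fm f))"

text \<open>A comonad (B, der, dig): B = (Bo,Bm) is the endofunctor written !.\<close>

definition comonad ::
  "'o set \<Rightarrow> ('o \<Rightarrow> 'o \<Rightarrow> 'm set) \<Rightarrow> ('m \<Rightarrow> 'm \<Rightarrow> 'm) \<Rightarrow> ('o \<Rightarrow> 'm)
   \<Rightarrow> ('o \<Rightarrow> 'o) \<Rightarrow> ('m \<Rightarrow> 'm) \<Rightarrow> ('o \<Rightarrow> 'm) \<Rightarrow> ('o \<Rightarrow> 'm) \<Rightarrow> bool" where
  "comonad Obj Hom cmp idm Bo Bm der dig \<longleftrightarrow>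
     category Obj Hom cmp idm \<and>
     endofunctor Obj Hom cmp idm Bo Bm \<and>
     nat_trans Obj Hom cmp Bo Bm id id der \<and>
     nat_trans Obj Hom cmp Bo Bm (Bo \<circ> Bo) (Bm \<circ> Bm) dig \<and>
     (\<forall>X\<in>Obj. cmp (der (Bo X)) (dig X) = idm (Bo X)) \<and>
     (\<forall>X\<in>Obj. cmp (Bm (der X)) (dig X) = idm (Bo X)) \<and>
     (\<forall>X\<in>Obj. cmp (dig (Bo X)) (dig X) = cmp (Bm (dig X)) (dig X))"

definition zero_morphisms ::
  "'o set \<Rightarrow> ('o \<Rightarrow> 'o \<Rightarrow> 'm set) \<Rightarrow> ('m \<Rightarrow> 'm \<Rightarrow> 'm) \<Rightarrow> ('o \<Rightarrow> 'o \<Rightarrow> 'm) \<Rightarrow> bool" where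
  "zero_morphisms Obj Hom cmp zero \<longleftrightarrow>
     (\<forall>X\<in>Obj. \<forall>Y\<in>Obj. zero X Y \<in> Hom X Y) \<and>
     (\<forall>X\<in>Obj. \<forall>Y\<in>Obj. \<forall>Z\<in>Obj. \<forall>f\<in>Hom X Y. cmp (zero Y Z) f = zero X Z) \<and>
     (\<forall>X\<in>Obj. \<forall>Y\<in>Obj. \<forall>Z\<in>Obj. \<forall>g\<in>Hom Y Z. cmp g (zero X Y) = zero X Z)"

definition pre_summability ::
  "'o set \<Rightarrow> ('o \<Rightarrow> 'o \<Rightarrow> 'm set) \<Rightarrow> ('m \<Rightarrow> 'm \<Rightarrow> 'm) \<Rightarrow> ('o \<Rightarrow> 'm) \<Rightarrow> ('o \<Rightarrow> 'o \<Rightarrow> 'm)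
   \<Rightarrow> ('o \<Rightarrow> 'o) \<Rightarrow> ('m \<Rightarrow> 'm) \<Rightarrow> ('o \<Rightarrow> 'm) \<Rightarrow> ('o \<Rightarrow> 'm) \<Rightarrow> ('o \<Rightarrow> 'm) \<Rightarrow> bool" where
  "pre_summability Obj Hom cmp idm zero So Sm p0 p1 sig \<longleftrightarrow>
     category Obj Hom cmp idm \<and>
     zero_morphisms Obj Hom cmp zero \<and>
     endofunctor Obj Hom cmp idm So Sm \<and>
     (\<forall>X\<in>Obj. \<forall>Y\<in>Obj. Sm (zero X Y) = zero (So X) (So Y)) \<and>
     nat_trans Obj Hom cmp So Sm id id p0 \<and>
     nat_trans Obj Hom cmp So Sm id id p1 \<and>
     nat_trans Obj Hom cmp So Sm id id sig \<and>
     (\<forall>Z\<in>Obj. \<forall>X\<in>Obj. \<forall>f\<in>Hom Z (So X). \<forall>g\<in>Hom Z (So X).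
        cmp (p0 X) f = cmp (p0 X) g \<longrightarrow> cmp (p1 X) f = cmp (p1 X) g \<longrightarrow> f = g)"

definition summable ::
  "('o \<Rightarrow> 'o \<Rightarrow> 'm set) \<Rightarrow> ('m \<Rightarrow> 'm \<Rightarrow> 'm) \<Rightarrow> ('o \<Rightarrow> 'o) \<Rightarrow> ('o \<Rightarrow> 'm) \<Rightarrow> ('o \<Rightarrow> 'm)
   \<Rightarrow> 'o \<Rightarrow> 'o \<Rightarrow> 'm \<Rightarrow> 'm \<Rightarrow> bool" where
  "summable Hom cmp So p0 p1 X Y f0 f1 \<longleftrightarrow>
     f0 \<in> Hom X Y \<and> f1 \<in> Hom X Y \<and>
     (\<exists>h\<in>Hom X (So Y). cmp (p0 Y) h = f0 \<and> cmp (p1 Y) h = f1)"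

definition spair ::
  "('o \<Rightarrow> 'o \<Rightarrow> 'm set) \<Rightarrow> ('m \<Rightarrow> 'm \<Rightarrow> 'm) \<Rightarrow> ('o \<Rightarrow> 'o) \<Rightarrow> ('o \<Rightarrow> 'm) \<Rightarrow> ('o \<Rightarrow> 'm)
   \<Rightarrow> 'o \<Rightarrow> 'o \<Rightarrow> 'm \<Rightarrow> 'm \<Rightarrow> 'm" where
  "spair Hom cmp So p0 p1 X Y f0 f1 =
     (THE h. h \<in> Hom X (So Y) \<and> cmp (p0 Y) h = f0 \<and> cmp (p1 Y) h = f1)"

definition ssum ::
  "('o \<Rightarrow> 'o \<Rightarrow> 'm set) \<Rightarrow> ('m \<Rightarrow> 'm \<Rightarrow> 'm) \<Rightarrow> ('o \<Rightarrow> 'o) \<Rightarrow> ('o \<Rightarrow> 'm) \<Rightarrow> ('o \<Rightarrow> 'm)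
   \<Rightarrow> ('o \<Rightarrow> 'm) \<Rightarrow> 'o \<Rightarrow> 'o \<Rightarrow> 'm \<Rightarrow> 'm \<Rightarrow> 'm" where
  "ssum Hom cmp So p0 p1 sig X Y f0 f1 = cmp (sig Y) (spair Hom cmp So p0 p1 X Y f0 f1)"

definition summability ::
  "'o set \<Rightarrow> ('o \<Rightarrow> 'o \<Rightarrow> 'm set) \<Rightarrow> ('m \<Rightarrow> 'm \<Rightarrow> 'm) \<Rightarrow> ('o \<Rightarrow> 'm) \<Rightarrow> ('o \<Rightarrow> 'o \<Rightarrow> 'm)
   \<Rightarrow> ('o \<Rightarrow> 'o) \<Rightarrow> ('m \<Rightarrow> 'm) \<Rightarrow> ('o \<Rightarrow> 'm) \<Rightarrow> ('o \<Rightarrow> 'm) \<Rightarrow> ('o \<Rightarrow> 'm) \<Rightarrow> bool" where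
  "summability Obj Hom cmp idm zero So Sm p0 p1 sig \<longleftrightarrow>
     pre_summability Obj Hom cmp idm zero So Sm p0 p1 sig \<and>
     (\<forall>X\<in>Obj. \<forall>Y\<in>Obj. \<forall>f0 f1. summable Hom cmp So p0 p1 X Y f0 f1 \<longrightarrow>
        summable Hom cmp So p0 p1 X Y f1 f0 \<and>
        ssum Hom cmp So p0 p1 sig X Y f0 f1 = ssum Hom cmp So p0 p1 sig X Y f1 f0) \<and>
     (\<forall>X\<in>Obj. \<forall>Y\<in>Obj. \<forall>f\<in>Hom X Y.
        summable Hom cmp So p0 p1 X Y f (zero X Y) \<and>
        ssum Hom cmp So p0 p1 sig X Y f (zero X Y) = f) \<and>
     (\<forall>X\<in>Obj. \<forall>Y\<in>Obj. \<forall>f0 f1 f2.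
        summable Hom cmp So p0 p1 X Y f0 f1 \<and>
        summable Hom cmp So p0 p1 X Y (ssum Hom cmp So p0 p1 sig X Y f0 f1) f2 \<longrightarrow>
          summable Hom cmp So p0 p1 X Y f1 f2 \<and>
          summable Hom cmp So p0 p1 X Y f0 (ssum Hom cmp So p0 p1 sig X Y f1 f2) \<and>
          ssum Hom cmp So p0 p1 sig X Y (ssum Hom cmp So p0 p1 sig X Y f0 f1) f2 =
          ssum Hom cmp So p0 p1 sig X Y f0 (ssum Hom cmp So p0 p1 sig X Y f1 f2))"

end

theory Submission
  imports Defs
begin

theorem mainTheorem4:
  fixes Obj :: "'o set" and Hom :: "'o \<Rightarrow> 'o \<Rightarrow> 'm set" and cmp :: "'m \<Rightarrow> 'm \<Rightarrow> 'm"
    and idm :: "'o \<Rightarrow> 'm"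
    and Bo :: "'o \<Rightarrow> 'o" and Bm :: "'m \<Rightarrow> 'm" and der dig :: "'o \<Rightarrow> 'm"
    and zero :: "'o \<Rightarrow> 'o \<Rightarrow> 'm" and So :: "'o \<Rightarrow> 'o" and Sm :: "'m \<Rightarrow> 'm"
    and p0 p1 sig :: "'o \<Rightarrow> 'm" and dd :: "'o \<Rightarrow> 'm"
  assumes "comonad Obj Hom cmp idm Bo Bm der dig"
    and "summability Obj Hom cmp idm zero So Sm p0 p1 sig"
    and "nat_trans Obj Hom cmp (Bo \<circ> So) (Bm \<circ> Sm) (So \<circ> Bo) (Sm \<circ> Bm) dd"
    and "\<forall>X\<in>Obj. cmp (p0 (Bo X)) (dd X) = Bm (p0 X)"
  shows "(\<forall>X\<in>Obj. cmp (Sm (der X)) (dd X) = der (So X)) \<longleftrightarrow>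
         (\<forall>X\<in>Obj. cmp (der X) (cmp (p1 (Bo X)) (dd X)) = cmp (der X) (Bm (p1 X)))"
proof -
  have cat: "category Obj Hom cmp idm" and B: "endofunctor Obj Hom cmp idm Bo Bm"
    and dern: "nat_trans Obj Hom cmp Bo Bm id id der"
    using assms(1) unfolding comonad_def by auto
  have S: "endofunctor Obj Hom cmp idm So Sm"
    and p0n: "nat_trans Obj Hom cmp So Sm id id p0"
    and p1n: "nat_trans Obj Hom cmp So Sm id id p1"
    and mono: "\<forall>Z\<in>Obj. \<forall>X\<in>Obj. \<forall>f\<in>Hom Z (So X). \<forall>g\<in>Hom Z (So X).
        cmp (p0 X) f = cmp (p0 X) g \<longrightarrow> cmp (p1 X) f = cmp (p1 X) g \<longrightarrow> f = g"
    using assms(2) unfolding summability_def pre_summability_def by auto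
  have comp: "\<And>X Y Z f g. X \<in> Obj \<Longrightarrow> Y \<in> Obj \<Longrightarrow> Z \<in> Obj \<Longrightarrow> f \<in> Hom X Y \<Longrightarrow> g \<in> Hom Y Z
      \<Longrightarrow> cmp g f \<in> Hom X Z" using cat unfolding category_def by blast
  have assoc: "\<And>W X Y Z f g h. W \<in> Obj \<Longrightarrow> X \<in> Obj \<Longrightarrow> Y \<in> Obj \<Longrightarrow> Z \<in> Obj \<Longrightarrow>
      f \<in> Hom W X \<Longrightarrow> g \<in> Hom X Y \<Longrightarrow> h \<in> Hom Y Z \<Longrightarrow> cmp h (cmp g f) = cmp (cmp h g) f"
    using cat unfolding category_def by blast
  have BO: "\<And>X. X \<in> Obj \<Longrightarrow> Bo X \<in> Obj" using B unfolding endofunctor_def by blast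
  have SO: "\<And>X. X \<in> Obj \<Longrightarrow> So X \<in> Obj" using S unfolding endofunctor_def by blast
  have Sf: "\<And>X Y f. X \<in> Obj \<Longrightarrow> Y \<in> Obj \<Longrightarrow> f \<in> Hom X Y \<Longrightarrow> Sm f \<in> Hom (So X) (So Y)"
    using S unfolding endofunctor_def by blast
  have derH: "\<And>X. X \<in> Obj \<Longrightarrow> der X \<in> Hom (Bo X) X"
    and dernat: "\<And>X Y f. X \<in> Obj \<Longrightarrow> Y \<in> Obj \<Longrightarrow> f \<in> Hom X Y \<Longrightarrow> cmp f (der X) = cmp (der Y) (Bm f)"
    using dern unfolding nat_trans_def by auto
  have p0H: "\<And>X. X \<in> Obj \<Longrightarrow> p0 X \<in> Hom (So X) X"
    and p0nat: "\<And>X Y f. X \<in> Obj \<Longrightarrow> Y \<in> Obj \<Longrightarrow> f \<in> Hom X Y \<Longrightarrow> cmp f (p0 X) = cmp (p0 Y) (Sm f)"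
    using p0n unfolding nat_trans_def by auto
  have p1H: "\<And>X. X \<in> Obj \<Longrightarrow> p1 X \<in> Hom (So X) X"
    and p1nat: "\<And>X Y f. X \<in> Obj \<Longrightarrow> Y \<in> Obj \<Longrightarrow> f \<in> Hom X Y \<Longrightarrow> cmp f (p1 X) = cmp (p1 Y) (Sm f)"
    using p1n unfolding nat_trans_def by auto
  have ddH: "\<And>X. X \<in> Obj \<Longrightarrow> dd X \<in> Hom (Bo (So X)) (So (Bo X))"
    using assms(3) unfolding nat_trans_def by auto
  have key: "cmp (Sm (der X)) (dd X) = der (So X) \<longleftrightarrow>
       cmp (der X) (cmp (p1 (Bo X)) (dd X)) = cmp (der X) (Bm (p1 X))" if X: "X \<in> Obj" for X
  proof -
    have o: "Bo X \<in> Obj" "So X \<in> Obj" "Bo (So X) \<in> Obj" "So (Bo X) \<in> Obj"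
      using X BO SO by auto
    have h1: "Sm (der X) \<in> Hom (So (Bo X)) (So X)" using Sf derH o X by auto
    have h2: "cmp (Sm (der X)) (dd X) \<in> Hom (Bo (So X)) (So X)"
      using comp[OF o(3) o(4) o(2) ddH[OF X] h1] .
    have h3: "der (So X) \<in> Hom (Bo (So X)) (So X)" using derH o by auto
    have e0: "cmp (p0 X) (cmp (Sm (der X)) (dd X)) = cmp (der X) (cmp (p0 (Bo X)) (dd X))"
      using assoc[OF o(3) o(4) o(2) X ddH[OF X] h1 p0H[OF X]]
        assoc[OF o(3) o(4) o(1) X ddH[OF X] p0H[OF o(1)] derH[OF X]]
        p0nat[OF o(1) X derH[OF X]] by simp
    have e0': "cmp (p0 X) (der (So X)) = cmp (der X) (Bm (p0 X))"
      using dernat[OF o(2) X p0H[OF X]] .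
    have e1: "cmp (p1 X) (cmp (Sm (der X)) (dd X)) = cmp (der X) (cmp (p1 (Bo X)) (dd X))"
      using assoc[OF o(3) o(4) o(2) X ddH[OF X] h1 p1H[OF X]]
        assoc[OF o(3) o(4) o(1) X ddH[OF X] p1H[OF o(1)] derH[OF X]]
        p1nat[OF o(1) X derH[OF X]] by simp
    have e1': "cmp (p1 X) (der (So X)) = cmp (der X) (Bm (p1 X))"
      using dernat[OF o(2) X p1H[OF X]] .
    have p0eq: "cmp (p0 X) (cmp (Sm (der X)) (dd X)) = cmp (p0 X) (der (So X))"
      using e0 e0' assms(4) X by simp
    show ?thesis
    proof
      assume "cmp (Sm (der X)) (dd X) = der (So X)"
      then show "cmp (der X) (cmp (p1 (Bo X)) (dd X)) = cmp (der X) (Bm (p1 X))"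
        using e1 e1' by metis
    next
      assume "cmp (der X) (cmp (p1 (Bo X)) (dd X)) = cmp (der X) (Bm (p1 X))"
      then have "cmp (p1 X) (cmp (Sm (der X)) (dd X)) = cmp (p1 X) (der (So X))"
        using e1 e1' by simp
      then show "cmp (Sm (der X)) (dd X) = der (So X)"
        using mono o(3) X h2 h3 p0eq by blast
    qed
  qed
  show ?thesis using key by blast
qed

end
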